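(* Let $n\in\mathbb{N}$ and let $\mathbf{s}=(s_0,\ldots,s_n)\subset[0,\infty)$ be positive on $(0,1]$. Set $K=\mathrm{ind}_1(\mathbf{s})$ and $N=2K-1$. Then (i) $s_k\in\big(t_1((s_{k+1},\ldots,s_n)),\infty\big)$ for $k\in\mathbb{N}\cap[n-N,n-1]$; (ii) $s_k=t_1((s_{k+1},\ldots,s_{k+N+1}))$ for $k\in\mathbb{N}\cap[0,n-N-1]$.
   Context: For $a<b$ and a finite sequence $\mathbf{u}=(u_0,\ldots,u_m)$, $\mathbf{u}$ is positive on $[a,b]$ if the functional $\sigma(x^k)=u_k$ is $\ge0$ on every real polynomial of degree $\le m$ nonnegative on $[a,b]$; positive on $(0,1]$ means positive on some $[a,b]$ with $0<a<b\le1$. $\mathcal{M}_{a,b}(\mathbf{u})$ is the set of positive Borel measures on $[a,b]$ with $k$-th moments $u_k$; $\mathcal{M}_1(\mathbf{u})$ is the set of positive Borel measures on $(0,1]$ supported in some $[a,b]\subset(0,1]$, $a>0$, with these moments. For finitely supported $\mu$, $\mathrm{ind}_1(\mu)=\#(\mathrm{supp}\,\mu\cap(0,1))+\frac12\chi_{\mathrm{supp}\,\mu}(1)$, else $\infty$; $\mathrm{ind}_1(\mathbf{u})=\min\{\mathrm{ind}_1(\mu):\mu\in\mathcal{M}_1(\mathbf{u})\}$ (a half-integer or integer). $t_{a,b}(\mathbf{u})=\inf\{\int\frac1t\,d\mu:\mu\in\mathcal{M}_{a,b}(\mathbf{u})\}$ ($\inf\varnothing=\infty$) and $t_1(\mathbf{u})=\inf_{0<a<b\le1}t_{a,b}(\mathbf{u})$.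 *)

theory Defs
  imports "HOL-Analysis.Analysis" "HOL-Probability.Probability" "HOL-Computational_Algebra.Polynomial"
begin

definition moment_functional :: "real list \<Rightarrow> real poly \<Rightarrow> real" where
  "moment_functional u p = (\<Sum>k<length u. coeff p k * u ! k)"

definition positive_on :: "real list \<Rightarrow> real \<Rightarrow> real \<Rightarrow> bool" where
  "positive_on u a b \<longleftrightarrow>
     (\<forall>p :: real poly. degree p + 1 \<le> length u \<longrightarrow> (\<forall>x\<in>{a..b}. poly p x \<ge> 0)
        \<longrightarrow> moment_functional u p \<ge> 0)"

definition positive_on_01 :: "real list \<Rightarrow> bool" where
  "positive_on_01 u \<longleftrightarrow> (\<exists>a b. 0 < a \<and> a < b \<and> b \<le> 1 \<and> positive_on u a b)"

definition moment_measures :: "real list \<Rightarrow> real \<Rightarrow> real \<Rightarrow> real measure set" where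
  "moment_measures u a b =
     {M. sets M = sets borel \<and> finite_measure M \<and> emeasure M (- {a..b}) = 0 \<and>
         (\<forall>k<length u. integrable M (\<lambda>x. x ^ k) \<and> (\<integral>x. x ^ k \<partial>M) = u ! k)}"

definition moment_measures_1 :: "real list \<Rightarrow> real measure set" where
  "moment_measures_1 u = (\<Union>{moment_measures u a b | a b. 0 < a \<and> a < b \<and> b \<le> 1})"

definition msupp :: "real measure \<Rightarrow> real set" where
  "msupp M = {x. \<forall>e>0. emeasure M (ball x e) > 0}"

definition ind1_measure :: "real measure \<Rightarrow> ereal" where
  "ind1_measure M =
     (if finite (msupp M)
      then ereal (real (card (msupp M \<inter> {0<..<1})) + (if 1 \<in> msupp M then 1/2 else 0))
      else \<infinity>)"

definition ind1 :: "real list \<Rightarrow> ereal" where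
  "ind1 u = (INF M\<in>moment_measures_1 u. ind1_measure M)"

definition t_ab :: "real list \<Rightarrow> real \<Rightarrow> real \<Rightarrow> ereal" where
  "t_ab u a b = (INF M\<in>moment_measures u a b. ereal (\<integral>t. 1 / t \<partial>M))"

definition t1 :: "real list \<Rightarrow> ereal" where
  "t1 u = (INF p\<in>{(a, b). 0 < a \<and> a < b \<and> b \<le> 1}. t_ab u (fst p) (snd p))"

end

theory Submission
  imports Defs
begin

definition amu :: "real set \<Rightarrow> (real \<Rightarrow> real) \<Rightarrow> real measure" where
  "amu S w = distr (density (count_space S) (\<lambda>x. ennreal (w x))) borel (\<lambda>x. x)"

lemma amu_sets[simp]: "sets (amu S w) = sets borel"
  by (simp add: amu_def)

lemma amu_space[simp]: "space (amu S w) = UNIV"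
  by (simp add: amu_def)

lemma amu_emeasure:
  assumes "finite S" "A \<in> sets borel"
  shows "emeasure (amu S w) A = (\<Sum>x\<in>S\<inter>A. ennreal (w x))"
proof -
  have "emeasure (amu S w) A = emeasure (density (count_space S) (\<lambda>x. ennreal (w x))) (A \<inter> S)"
    unfolding amu_def using assms by (subst emeasure_distr) (auto simp: Int_commute)
  also have "\<dots> = (\<integral>\<^sup>+x. ennreal (w x) * indicator (A \<inter> S) x \<partial>count_space S)"
    by (subst emeasure_density) auto
  also have "\<dots> = (\<Sum>x\<in>S. ennreal (w x) * indicator (A \<inter> S) x)"
    using assms by (simp add: nn_integral_count_space_finite)
  also have "\<dots> = (\<Sum>x\<in>S\<inter>A. ennreal (w x))"
    using assms by (simp add: sum.inter_restrict[symmetric] indicator_def Int_commute)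
  finally show ?thesis .
qed

lemma amu_integrable:
  assumes "finite S" "\<forall>x\<in>S. w x \<ge> 0" "f \<in> borel_measurable borel"
  shows "integrable (amu S w) (f::real\<Rightarrow>real)"
  unfolding amu_def using assms
  apply (subst integrable_distr_eq[where N=borel])
    apply auto
  apply (subst integrable_density)
     apply (auto simp: AE_count_space integrable_count_space)
  done

lemma amu_integral:
  assumes "finite S" "\<forall>x\<in>S. w x \<ge> 0" "f \<in> borel_measurable borel"
  shows "(\<integral>x. (f x::real) \<partial>amu S w) = (\<Sum>x\<in>S. w x * f x)"
  unfolding amu_def using assms
  apply (subst integral_distr)
    apply auto
  apply (subst integral_density)
     apply (auto simp: AE_count_space lebesgue_integral_count_space_finite)
  done

lemma amu_finite_measure:
  assumes "finite S"
  shows "finite_measure (amu S w)"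
  using assms by (intro finite_measureI) (simp add: amu_emeasure[OF assms] sets.top[of borel, simplified])

lemma closed_ball_avoid:
  fixes C :: "real set"
  assumes "closed C" "x \<notin> C" shows "\<exists>e>0. ball x e \<subseteq> - C"
  using assms open_contains_ball[of "- C"] by (auto simp: closed_def)

lemma amu_msupp:
  assumes "finite S" "\<forall>x\<in>S. w x > 0"
  shows "msupp (amu S w) = S"
proof
  show "S \<subseteq> msupp (amu S w)"
  proof
    fix x assume x: "x \<in> S"
    show "x \<in> msupp (amu S w)"
      unfolding msupp_def
    proof (intro CollectI allI impI)
      fix e :: real assume e: "e > 0"
      have "emeasure (amu S w) (ball x e) = (\<Sum>y\<in>S\<inter>ball x e. ennreal (w y))"
        using assms by (intro amu_emeasure) auto
      also have "\<dots> \<ge> ennreal (w x)"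
        using x e assms by (intro member_le_sum) auto
      finally show "emeasure (amu S w) (ball x e) > 0"
        using assms x by (metis ennreal_eq_0_iff linorder_not_le not_gr_zero order_less_le_trans)
    qed
  qed
next
  show "msupp (amu S w) \<subseteq> S"
  proof
    fix x assume x: "x \<in> msupp (amu S w)"
    show "x \<in> S"
    proof (rule ccontr)
      assume nx: "x \<notin> S"
      have "closed S" using assms by (simp add: finite_imp_closed)
      then obtain e where e: "e > 0" "ball x e \<subseteq> - S"
        using nx closed_ball_avoid by blast
      have "emeasure (amu S w) (ball x e) = (\<Sum>y\<in>S\<inter>ball x e. ennreal (w y))"
        using assms by (intro amu_emeasure) auto
      also have "\<dots> = 0" using e by (subgoal_tac "S \<inter> ball x e = {}") auto
      finally show False using x e unfolding msupp_def by auto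
    qed
  qed
qed

lemma msupp_subset:
  assumes "sets M = sets borel" "emeasure M (- {a..b}) = 0"
  shows "msupp M \<subseteq> {a..(b::real)}"
proof
  fix x assume x: "x \<in> msupp M"
  show "x \<in> {a..b}"
  proof (rule ccontr)
    assume nx: "x \<notin> {a..b}"
    obtain e where e: "e > 0" "ball x e \<subseteq> - {a..b}"
      using nx closed_ball_avoid[of "{a..b}" x] by auto
    have "emeasure M (ball x e) \<le> emeasure M (- {a..b})"
      using e assms by (intro emeasure_mono) auto
    then show False using x e assms unfolding msupp_def by auto
  qed
qed

lemma msupp_null:
  assumes sets: "sets M = sets borel"
  shows "emeasure M (- msupp M) = 0"
proof -
  define F where "F = {ball x e | x e. e > 0 \<and> emeasure M (ball x e) = 0}"
  have eqF: "- msupp M = \<Union>F"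
  proof
    show "- msupp M \<subseteq> \<Union>F"
    proof
      fix x assume "x \<in> - msupp M"
      then obtain e where "e > 0" "\<not> emeasure M (ball x e) > 0" unfolding msupp_def by auto
      then show "x \<in> \<Union>F" unfolding F_def by (intro UnionI[of "ball x e"]) auto
    qed
  next
    show "\<Union>F \<subseteq> - msupp M"
    proof
      fix y assume "y \<in> \<Union>F"
      then obtain x e where xe: "e > 0" "emeasure M (ball x e) = 0" "y \<in> ball x e"
        unfolding F_def by auto
      define d where "d = e - dist x y"
      have d: "d > 0" using xe by (simp add: d_def dist_commute)
      have "ball y d \<subseteq> ball x e"
      proof
        fix z assume "z \<in> ball y d"
        then have "dist y z < d" by simp
        moreover have "dist x z \<le> dist x y + dist y z" by (rule dist_triangle)
        ultimately show "z \<in> ball x e" unfolding d_def by simp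
      qed
      then have "emeasure M (ball y d) \<le> emeasure M (ball x e)"
        using sets by (intro emeasure_mono) auto
      then have "emeasure M (ball y d) = 0" using xe by simp
      then show "y \<in> - msupp M" using d unfolding msupp_def by auto
    qed
  qed
  obtain F' where F': "F' \<subseteq> F" "countable F'" "\<Union>F' = \<Union>F"
    using Lindelof[of F] unfolding F_def by auto
  have nul: "\<Union>F' \<in> null_sets M"
  proof -
    have "\<forall>A\<in>F'. A \<in> null_sets M"
    proof
      fix A assume "A \<in> F'" then have "A \<in> F" using F' by auto
      then obtain x e where "A = ball x e" "emeasure M (ball x e) = 0" unfolding F_def by auto
      then show "A \<in> null_sets M" using sets by (simp add: null_sets_def)
    qed
    then have "(\<Union>A\<in>F'. A) \<in> null_sets M" using F'(2) by (intro null_sets_UN') auto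
    then show ?thesis by simp
  qed
  have "- msupp M = \<Union>F'" using eqF F'(3) by simp
  then show ?thesis using nul by (simp add: null_setsD1)
qed

lemma finite_msupp_integral:
  assumes sets: "sets M = sets borel" and fm: "finite_measure M" and fin: "finite (msupp M)"
    and f: "f \<in> borel_measurable borel"
  shows "(\<integral>x. (f x::real) \<partial>M) = (\<Sum>y\<in>msupp M. measure M {y} * f y)"
    and "integrable M f"
proof -
  interpret finite_measure M by fact
  have ms: "msupp M \<in> sets M" using fin sets by (simp add: borel_closed finite_imp_closed)
  have ae: "AE x in M. f x = (\<Sum>y\<in>msupp M. f y * indicator {y} x)"
  proof -
    have sp: "space M = UNIV" using sets_eq_imp_space_eq[OF sets] by simp
    have cs: "- msupp M \<in> sets M" using sets.compl_sets[OF ms] sp by (simp add: Compl_eq_Diff_UNIV)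
    have nl: "- msupp M \<in> null_sets M" using cs msupp_null[OF sets] by (simp add: null_sets_def)
    have "AE x in M. x \<in> msupp M"
      by (rule AE_I'[OF nl]) auto
    then show ?thesis
    proof (rule AE_mp, intro AE_I2 impI)
      fix x assume "x \<in> msupp M"
      have "(\<Sum>y\<in>msupp M. f y * indicator {y} x) = (\<Sum>y\<in>msupp M. if y = x then f x else 0)"
        by (intro sum.cong) (auto simp: indicator_def)
      also have "\<dots> = f x" using \<open>x \<in> msupp M\<close> fin by simp
      finally show "f x = (\<Sum>y\<in>msupp M. f y * indicator {y} x)" by simp
    qed
  qed
  have int: "integrable M (\<lambda>x. \<Sum>y\<in>msupp M. f y * indicator {y} x)"
    by (intro Bochner_Integration.integrable_sum integrable_mult_right integrable_real_indicator) (auto simp: sets less_top[symmetric])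
  have fm: "f \<in> borel_measurable M" using f by (simp add: measurable_cong_sets[OF sets refl])
  have ae2: "AE x in M. (\<Sum>y\<in>msupp M. f y * indicator {y} x) = f x"
    by (rule AE_mp[OF ae]) (intro AE_I2, auto)
  show "integrable M f"
    by (rule integrable_cong_AE_imp[OF int fm ae2])
  have "(\<integral>x. f x \<partial>M) = (\<integral>x. (\<Sum>y\<in>msupp M. f y * indicator {y} x) \<partial>M)"
    using int fm ae by (intro integral_cong_AE) auto
  also have "\<dots> = (\<Sum>y\<in>msupp M. measure M {y} * f y)"
    using sets by (subst Bochner_Integration.integral_sum) (auto intro!: integrable_mult_right integrable_real_indicator simp: mult.commute less_top[symmetric])
  finally show "(\<integral>x. f x \<partial>M) = (\<Sum>y\<in>msupp M. measure M {y} * f y)" .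
qed

lemma finite_msupp_pos:
  assumes sets: "sets M = sets borel" and fm: "finite_measure M" and fin: "finite (msupp M)"
    and x: "x \<in> msupp M"
  shows "measure M {x} > 0"
proof -
  interpret finite_measure M by fact
  have ms: "msupp M \<in> sets M" using fin sets by (simp add: borel_closed finite_imp_closed)
  have "closed (msupp M - {x})" using fin by (simp add: finite_imp_closed)
  then obtain e where e: "e > 0" "ball x e \<subseteq> - (msupp M - {x})"
    by (metis Compl_iff DiffD2 insertI1 open_Compl open_contains_ball)
  have sp: "space M = UNIV" using sets_eq_imp_space_eq[OF sets] by simp
  have cs: "- msupp M \<in> sets M" using sets.compl_sets[OF ms] sp by (simp add: Compl_eq_Diff_UNIV)
  have xs: "{x} \<in> sets M" using sets by simp
  have us: "{x} \<union> - msupp M \<in> sets M" using cs xs by blast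
  have "ball x e \<subseteq> {x} \<union> - msupp M" using e by auto
  then have "emeasure M (ball x e) \<le> emeasure M ({x} \<union> - msupp M)"
    using us by (intro emeasure_mono) auto
  also have "\<dots> \<le> emeasure M {x} + emeasure M (- msupp M)"
    using cs xs by (intro emeasure_subadditive) auto
  also have "\<dots> = emeasure M {x}" using msupp_null[OF sets] by simp
  finally have "emeasure M {x} > 0" using x e unfolding msupp_def by (auto intro: order_less_le_trans)
  then show ?thesis by (simp add: emeasure_eq_measure)
qed

definition pol :: "(nat \<Rightarrow> real) \<Rightarrow> nat \<Rightarrow> real poly" where
  "pol c m = (\<Sum>j\<le>m. monom (c j) j)"

lemma pol_poly: "poly (pol c m) x = (\<Sum>j\<le>m. c j * x ^ j)"
  by (simp add: pol_def poly_sum poly_monom)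

lemma pol_coeff: "coeff (pol c m) k = (if k \<le> m then c k else 0)"
  by (simp add: pol_def coeff_sum coeff_monom)

lemma pol_degree: "degree (pol c m) \<le> m"
  by (rule degree_le) (simp add: pol_coeff)

lemma lagrange_kernel:
  fixes y :: "nat \<Rightarrow> real" and p j :: nat
  assumes inj: "inj_on y {..p}" and jp: "j < p"
  shows "(\<Sum>i\<le>p. y i ^ j / (\<Prod>l\<in>{..p}-{i}. (y i - y l))) = 0"
proof -
  define d where "d i = (\<Prod>l\<in>{..p}-{i}. (y i - y l))" for i
  define Li where "Li i = (\<Prod>l\<in>{..p}-{i}. [:- y l, 1:])" for i
  define g where "g = (\<Sum>i\<le>p. smult (y i ^ j / d i) (Li i))"
  have d0: "d i \<noteq> 0" if "i \<le> p" for i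
    unfolding d_def using inj that by (auto simp: inj_on_def)
  have degLi: "degree (Li i) = p" if "i \<le> p" for i
  proof -
    have "degree (Li i) = (\<Sum>l\<in>{..p}-{i}. degree [:- y l, 1:])"
      unfolding Li_def by (rule degree_prod_eq_sum_degree) auto
    also have "\<dots> = card ({..p}-{i})" by simp
    also have "\<dots> = p" using that by simp
    finally show ?thesis .
  qed
  have lcLi: "coeff (Li i) p = 1" if "i \<le> p" for i
  proof -
    have "lead_coeff (Li i) = 1" unfolding Li_def lead_coeff_prod by simp
    then show ?thesis using degLi[OF that] by simp
  qed
  have polyLi: "poly (Li i) x = (\<Prod>l\<in>{..p}-{i}. (x - y l))" for i x
    by (simp add: Li_def poly_prod)
  have gval: "poly g (y k) = y k ^ j" if k: "k \<le> p" for k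
  proof -
    have "poly g (y k) = (\<Sum>i\<le>p. (y i ^ j / d i) * (\<Prod>l\<in>{..p}-{i}. (y k - y l)))"
      by (simp add: g_def poly_sum polyLi)
    also have "\<dots> = (\<Sum>i\<le>p. if i = k then y k ^ j else 0)"
    proof (intro sum.cong refl)
      fix i assume i: "i \<in> {..p}"
      show "(y i ^ j / d i) * (\<Prod>l\<in>{..p}-{i}. (y k - y l)) = (if i = k then y k ^ j else 0)"
      proof (cases "i = k")
        case True then show ?thesis using d0[OF k] by (simp add: d_def)
      next
        case False
        have "(\<Prod>l\<in>{..p}-{i}. (y k - y l)) = 0"
          using False k by (intro prod_zero) (auto intro!: bexI[of _ k])
        then show ?thesis using False by simp
      qed
    qed
    also have "\<dots> = y k ^ j" using k by simp
    finally show ?thesis .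
  qed
  have degg: "degree g \<le> p"
    unfolding g_def
    by (intro degree_sum_le order.trans[OF degree_smult_le]) (auto simp: degLi)
  have "g = monom 1 j"
  proof (rule poly_eqI_degree[of "y ` {..p}"])
    fix x assume "x \<in> y ` {..p}"
    then show "poly g x = poly (monom 1 j) x" using gval by (auto simp: poly_monom)
  next
    have "card (y ` {..p}) = Suc p" using inj by (simp add: card_image)
    then show "degree g < card (y ` {..p})" "degree (monom (1::real) j) < card (y ` {..p})"
      using degg jp by (auto simp: degree_monom_eq)
  qed
  then have "coeff g p = 0" using jp by (simp add: coeff_monom)
  moreover have "coeff g p = (\<Sum>i\<le>p. y i ^ j / d i)"
    by (simp add: g_def coeff_sum lcLi)
  ultimately show ?thesis by (simp add: d_def)
qed

definition mom :: "(nat \<Rightarrow> real) \<Rightarrow> (nat \<Rightarrow> real) \<Rightarrow> nat \<Rightarrow> nat \<Rightarrow> real" where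
  "mom t l M j = (\<Sum>i<M. l i * t i ^ j)"

definition adm :: "real \<Rightarrow> real \<Rightarrow> nat \<Rightarrow> (nat \<Rightarrow> real) \<Rightarrow> (nat \<Rightarrow> real) \<Rightarrow> bool" where
  "adm a b M t l \<longleftrightarrow> (\<forall>i<M. a \<le> t i \<and> t i \<le> b \<and> 0 \<le> l i)"

definition skip :: "nat \<Rightarrow> nat \<Rightarrow> nat" where
  "skip i k = (if k < i then k else Suc k)"

lemma sum_skip:
  assumes "i < Suc M"
  shows "(\<Sum>k<Suc M. f k) = f i + (\<Sum>k<M. f (skip i k))"
proof -
  have eq: "{..<Suc M} = insert i (skip i ` {..<M})"
  proof
    show "{..<Suc M} \<subseteq> insert i (skip i ` {..<M})"
    proof
      fix k assume k: "k \<in> {..<Suc M}"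
      show "k \<in> insert i (skip i ` {..<M})"
      proof (cases "k < i")
        case True then show ?thesis using assms by (auto simp: skip_def image_iff intro!: bexI[of _ k])
      next
        case False
        show ?thesis
        proof (cases "k = i")
          case False
          then have "k = skip i (k - 1)" "k - 1 < M" using \<open>\<not> k < i\<close> k by (auto simp: skip_def)
          then show ?thesis by blast
        qed simp
      qed
    qed
    show "insert i (skip i ` {..<M}) \<subseteq> {..<Suc M}" using assms by (auto simp: skip_def)
  qed
  have inj: "inj_on (skip i) {..<M}" by (auto simp: inj_on_def skip_def split: if_splits)
  have ni: "i \<notin> skip i ` {..<M}" by (auto simp: skip_def split: if_splits)
  show ?thesis
    unfolding eq using ni inj by (simp add: sum.reindex)
qed

lemma drop_zero:
  assumes "adm a b (Suc M) t l" "i < Suc M" "l i = 0"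
  shows "adm a b M (t \<circ> skip i) (l \<circ> skip i) \<and> (\<forall>j. mom (t \<circ> skip i) (l \<circ> skip i) M j = mom t l (Suc M) j)"
proof
  show "adm a b M (t \<circ> skip i) (l \<circ> skip i)"
    using assms(1) unfolding adm_def by (auto simp: skip_def)
  show "\<forall>j. mom (t \<circ> skip i) (l \<circ> skip i) M j = mom t l (Suc M) j"
  proof
    fix j
    have "mom t l (Suc M) j = l i * t i ^ j + (\<Sum>k<M. l (skip i k) * t (skip i k) ^ j)"
      unfolding mom_def by (rule sum_skip[OF assms(2)])
    then show "mom (t \<circ> skip i) (l \<circ> skip i) M j = mom t l (Suc M) j"
      using assms(3) by (simp add: mom_def)
  qed
qed

lemma merge:
  assumes "adm a b (Suc M) t l" "i < Suc M" "k < Suc M" "i \<noteq> k" "t i = t k"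
  shows "\<exists>l'. adm a b (Suc M) t l' \<and> l' i = 0 \<and> (\<forall>j. mom t l' (Suc M) j = mom t l (Suc M) j)"
proof (intro exI conjI allI)
  define l' where "l' = l(k := l k + l i, i := 0)"
  show "adm a b (Suc M) t l'" using assms unfolding adm_def l'_def by auto
  show "l' i = 0" by (simp add: l'_def)
  fix j
  have "mom t l' (Suc M) j - mom t l (Suc M) j = (\<Sum>x<Suc M. (l' x - l x) * t x ^ j)"
    by (simp only: mom_def left_diff_distrib sum_subtractf)
  also have "\<dots> = (\<Sum>x<Suc M. (if x = k then l i * t k ^ j else 0) - (if x = i then l i * t i ^ j else 0))"
    by (intro sum.cong refl) (use assms in \<open>auto simp: l'_def\<close>)
  also have "\<dots> = 0" using assms by (simp add: sum_subtractf del: sum.lessThan_Suc)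
  finally show "mom t l' (Suc M) j = mom t l (Suc M) j" by simp
qed

lemma kernel_step:
  assumes adm: "adm a b (Suc M) t l" and inj: "inj_on t {..M}" and pos: "\<forall>i<Suc M. l i > 0" and M: "0 < M"
  shows "\<exists>l'. adm a b (Suc M) t l' \<and> (\<exists>i<Suc M. l' i = 0) \<and> (\<forall>j<M. mom t l' (Suc M) j = mom t l (Suc M) j)"
proof -
  define w where "w i = 1 / (\<Prod>l\<in>{..M}-{i}. (t i - t l))" for i
  have ker: "(\<Sum>i<Suc M. w i * t i ^ j) = 0" if "j < M" for j
  proof -
    have "(\<Sum>i<Suc M. w i * t i ^ j) = (\<Sum>i\<le>M. t i ^ j / (\<Prod>l\<in>{..M}-{i}. (t i - t l)))"
      by (simp add: w_def lessThan_Suc_atMost)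
    also have "\<dots> = 0" by (rule lagrange_kernel[OF inj that])
    finally show ?thesis .
  qed
  have w0: "w i \<noteq> 0" if "i < Suc M" for i
    using inj that unfolding w_def by (auto simp: inj_on_def)
  define P where "P = {i. i < Suc M \<and> w i > 0}"
  have "P \<noteq> {}"
  proof
    assume "P = {}"
    then have nonpos: "\<forall>i<Suc M. 0 \<le> - w i" by (force simp: P_def)
    have "(\<Sum>i<Suc M. - w i) = 0" using ker[OF M] by (simp add: sum_negf)
    then have "\<forall>i\<in>{..<Suc M}. - w i = 0" using nonpos by (subst sum_nonneg_eq_0_iff[symmetric]) auto
    then show False using w0 by auto
  qed
  have finP: "finite P" by (simp add: P_def)
  define \<theta> where "\<theta> = Min ((\<lambda>i. l i / w i) ` P)"
  have "\<theta> \<in> (\<lambda>i. l i / w i) ` P"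
    unfolding \<theta>_def using finP \<open>P \<noteq> {}\<close> by (intro Min_in) auto
  then obtain i0 where i0: "i0 \<in> P" "\<theta> = l i0 / w i0" by auto
  have th_le: "\<theta> \<le> l i / w i" if "i \<in> P" for i
    unfolding \<theta>_def using finP that by (intro Min_le) auto
  have th_pos: "\<theta> > 0" using i0 pos by (auto simp: P_def)
  define l' where "l' i = l i - \<theta> * w i" for i
  show ?thesis
  proof (rule exI[of _ l'], intro conjI)
    show "adm a b (Suc M) t l'"
      unfolding adm_def
    proof (intro allI impI conjI)
      fix i assume i: "i < Suc M"
      show "a \<le> t i" "t i \<le> b" using adm i by (auto simp: adm_def)
      show "0 \<le> l' i"
      proof (cases "w i > 0")
        case True
        then have "\<theta> \<le> l i / w i" using th_le i by (auto simp: P_def)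
        then have "\<theta> * w i \<le> l i" using True by (simp add: le_divide_eq)
        then show ?thesis by (simp add: l'_def)
      next
        case False
        then have "\<theta> * w i \<le> 0" using th_pos by (simp add: mult_nonneg_nonpos)
        then show ?thesis using pos i by (simp add: l'_def) (smt (verit))
      qed
    qed
    show "\<exists>i<Suc M. l' i = 0"
      using i0 by (intro exI[of _ i0]) (auto simp: P_def l'_def)
    show "\<forall>j<M. mom t l' (Suc M) j = mom t l (Suc M) j"
    proof (intro allI impI)
      fix j assume j: "j < M"
      have "mom t l' (Suc M) j = mom t l (Suc M) j - \<theta> * (\<Sum>i<Suc M. w i * t i ^ j)"
        by (simp add: mom_def l'_def algebra_simps sum_subtractf sum_distrib_left)
      then show "mom t l' (Suc M) j = mom t l (Suc M) j" using ker[OF j] by simp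
    qed
  qed
qed

lemma reduce_step:
  assumes adm: "adm a b (Suc M) t l" and M: "0 < M"
  shows "\<exists>t' l'. adm a b M t' l' \<and> (\<forall>j<M. mom t' l' M j = mom t l (Suc M) j)"
proof -
  have zero_case: "\<exists>t' l'. adm a b M t' l' \<and> (\<forall>j<M. mom t' l' M j = mom t l2 (Suc M) j)"
    if "adm a b (Suc M) t l2" "i < Suc M" "l2 i = 0" for l2 i
    using drop_zero[OF that] by blast
  show ?thesis
  proof (cases "\<exists>i<Suc M. l i = 0")
    case True
    then obtain i where "i < Suc M" "l i = 0" by auto
    then show ?thesis using zero_case[OF adm] by blast
  next
    case nz: False
    show ?thesis
    proof (cases "inj_on t {..M}")
      case False
      then obtain i k where ik: "i \<le> M" "k \<le> M" "i \<noteq> k" "t i = t k"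
        by (auto simp: inj_on_def)
      then obtain l' where l': "adm a b (Suc M) t l'" "l' i = 0" "\<forall>j. mom t l' (Suc M) j = mom t l (Suc M) j"
        using merge[OF adm, of i k] by auto
      then show ?thesis using zero_case[OF l'(1), of i] ik by auto
    next
      case True
      have pos: "\<forall>i<Suc M. l i > 0" using nz adm by (force simp: adm_def)
      obtain l' i where l': "adm a b (Suc M) t l'" "i < Suc M" "l' i = 0"
          "\<forall>j<M. mom t l' (Suc M) j = mom t l (Suc M) j"
        using kernel_step[OF adm True pos M] by auto
      then show ?thesis using zero_case[OF l'(1) l'(2) l'(3)] by auto
    qed
  qed
qed

lemma bounded_subseq:
  fixes X :: "nat \<Rightarrow> nat \<Rightarrow> real"
  assumes "\<forall>k i. i < M \<longrightarrow> \<bar>X k i\<bar> \<le> B"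
  shows "\<exists>r. strict_mono r \<and> (\<forall>i<M. convergent (\<lambda>k. X (r k) i))"
  using assms
proof (induction M)
  case 0
  then show ?case by (intro exI[of _ id]) (auto simp: strict_mono_def)
next
  case (Suc M)
  then obtain r where r: "strict_mono r" "\<forall>i<M. convergent (\<lambda>k. X (r k) i)" by auto
  define f where "f k = X (r k) M" for k
  have "Bseq f" using Suc.prems by (intro BseqI'[of _ B]) (auto simp: f_def)
  obtain r2 where r2: "strict_mono r2" "monoseq (\<lambda>n. f (r2 n))" using seq_monosub by blast
  have "Bseq (\<lambda>n. f (r2 n))" using \<open>Bseq f\<close> Suc.prems by (intro BseqI'[of _ B]) (auto simp: f_def)
  then have c2: "convergent (\<lambda>n. f (r2 n))" using r2(2) Bseq_monoseq_convergent by blast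
  show ?case
  proof (intro exI[of _ "r \<circ> r2"] conjI allI impI)
    show "strict_mono (r \<circ> r2)" using r r2 by (simp add: strict_mono_o)
    fix i assume i: "i < Suc M"
    show "convergent (\<lambda>k. X ((r \<circ> r2) k) i)"
    proof (cases "i = M")
      case True then show ?thesis using c2 by (simp add: f_def)
    next
      case False
      then have "convergent (\<lambda>k. X (r k) i)" using r i by auto
      from convergent_subseq_convergent[OF this r2(1)] show ?thesis by (simp add: o_def)
    qed
  qed
qed

lemma eps_le0:
  fixes X Y :: real
  assumes "\<forall>\<epsilon>. 0 < \<epsilon> \<and> \<epsilon> < 1 \<longrightarrow> X \<le> \<epsilon> * Y"
  shows "X \<le> 0"
proof (rule ccontr)
  assume "\<not> X \<le> 0"
  then have X: "X > 0" by simp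
  define \<epsilon> where "\<epsilon> = min (1/2) (X / (2 * (\<bar>Y\<bar> + 1)))"
  have e: "0 < \<epsilon>" "\<epsilon> < 1" using X by (auto simp: \<epsilon>_def)
  have "\<epsilon> * Y \<le> \<epsilon> * \<bar>Y\<bar>" using e by (simp add: mult_left_mono)
  also have "\<dots> \<le> X / (2 * (\<bar>Y\<bar> + 1)) * \<bar>Y\<bar>" by (intro mult_right_mono) (auto simp: \<epsilon>_def)
  also have "\<dots> < X"
  proof -
    have "X / (2 * (\<bar>Y\<bar> + 1)) * \<bar>Y\<bar> = X * (\<bar>Y\<bar> / (2 * (\<bar>Y\<bar> + 1)))" by simp
    also have "\<bar>Y\<bar> / (2 * (\<bar>Y\<bar> + 1)) < 1" by (simp add: divide_less_eq)
    then have "X * (\<bar>Y\<bar> / (2 * (\<bar>Y\<bar> + 1))) < X * 1" using X by (intro mult_strict_left_mono) auto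
    finally show ?thesis by simp
  qed
  finally show False using assms e by force
qed

lemma sq_expand:
  fixes e y :: "nat \<Rightarrow> real"
  shows "(\<Sum>j\<in>J. (e j - \<epsilon> * y j)\<^sup>2) = (\<Sum>j\<in>J. (e j)\<^sup>2) - 2 * \<epsilon> * (\<Sum>j\<in>J. e j * y j) + \<epsilon>\<^sup>2 * (\<Sum>j\<in>J. (y j)\<^sup>2)"
  by (simp add: power2_diff sum.distrib sum_subtractf sum_distrib_left algebra_simps power_mult_distrib)

lemma mom_upd:
  "mom (t(M := x)) (l(M := e)) (Suc M) j = mom t l M j + e * x ^ j"
proof -
  have "(\<Sum>i<M. (l(M := e)) i * (t(M := x)) i ^ j) = (\<Sum>i<M. l i * t i ^ j)"
    by (intro sum.cong) auto
  then show ?thesis by (simp add: mom_def)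
qed

lemma mom_scale: "mom t (\<lambda>i. c * l i) M j = c * mom t l M j"
  by (simp add: mom_def sum_distrib_left mult.assoc)

theorem moment_exists:
  fixes v :: "real list" and m :: nat
  assumes pos: "positive_on v a b" and ab: "a \<le> b" and len: "length v = Suc m"
  shows "\<exists>t l. adm a b (Suc m) t l \<and> (\<forall>j\<le>m. mom t l (Suc m) j = v ! j)"
proof -
  define M where "M = Suc m"
  define D where "D t l = (\<Sum>j\<le>m. (v!j - mom t l M j)\<^sup>2)" for t l
  define A where "A = {D t l | t l. adm a b M t l}"
  have D0: "0 \<le> D t l" for t l unfolding D_def by (intro sum_nonneg) auto
  have "adm a b M (\<lambda>_. a) (\<lambda>_. 0)" using ab by (simp add: adm_def)
  then have "D (\<lambda>_. a) (\<lambda>_. 0) \<in> A" unfolding A_def by blast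
  then have Ane: "A \<noteq> {}" by blast
  have Abdd: "bdd_below A" unfolding A_def using D0 by (auto intro!: bdd_belowI[of _ 0])
  define d where "d = Inf A"
  have dle: "d \<le> D t l" if "adm a b M t l" for t l
    unfolding d_def using Abdd that by (intro cInf_lower) (auto simp: A_def)
  have d0: "0 \<le> d" unfolding d_def using Ane D0 by (intro cInf_greatest) (auto simp: A_def)
  have "\<exists>t l. adm a b M t l \<and> D t l < d + inverse (real (Suc k))" for k
  proof -
    have "Inf A < d + inverse (real (Suc k))" by (simp add: d_def)
    from cInf_lessD[OF Ane this] show ?thesis by (auto simp: A_def)
  qed
  then obtain T L where TL: "\<And>k. adm a b M (T k) (L k)" "\<And>k. D (T k) (L k) < d + inverse (real (Suc k))"
    by metis
  have Tb: "\<bar>T k i\<bar> \<le> \<bar>a\<bar> + \<bar>b\<bar>" if "i < M" for k i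
    using TL(1)[of k] that by (auto simp: adm_def)
  have Lb: "\<bar>L k i\<bar> \<le> \<bar>v!0\<bar> + d + 2" if i: "i < M" for k i
  proof -
    have nn: "\<forall>i<M. 0 \<le> L k i" using TL(1)[of k] by (auto simp: adm_def)
    have m0: "mom (T k) (L k) M 0 = (\<Sum>i<M. L k i)" by (simp add: mom_def)
    have "L k i \<le> (\<Sum>i<M. L k i)" using nn i by (intro member_le_sum) auto
    moreover have "(\<Sum>i<M. L k i) \<le> \<bar>v!0\<bar> + d + 2"
    proof (rule ccontr)
      assume "\<not> ?thesis"
      then have c: "mom (T k) (L k) M 0 - v!0 > d + 2" using m0 by linarith
      have "(v!0 - mom (T k) (L k) M 0)\<^sup>2 \<le> D (T k) (L k)"
        unfolding D_def by (rule member_le_sum[of 0, where f = "\<lambda>j. (v!j - mom (T k) (L k) M j)\<^sup>2"]) auto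
      moreover have "(v!0 - mom (T k) (L k) M 0)\<^sup>2 \<ge> mom (T k) (L k) M 0 - v!0"
      proof -
        have "(v!0 - mom (T k) (L k) M 0)\<^sup>2 = (mom (T k) (L k) M 0 - v!0) * (mom (T k) (L k) M 0 - v!0)"
          by (simp add: power2_eq_square algebra_simps)
        also have "\<dots> \<ge> (mom (T k) (L k) M 0 - v!0) * 1" using c d0 by (intro mult_left_mono) auto
        finally show ?thesis by simp
      qed
      moreover have "inverse (real (Suc k)) \<le> 1" by (simp add: inverse_le_1_iff)
      ultimately show False using TL(2)[of k] c by linarith
    qed
    ultimately show ?thesis using nn i by auto
  qed
  obtain r1 where r1: "strict_mono r1" "\<forall>i<M. convergent (\<lambda>k. T (r1 k) i)"
    using bounded_subseq[of M "\<lambda>k i. T k i" "\<bar>a\<bar> + \<bar>b\<bar>"] Tb by auto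
  obtain r2 where r2: "strict_mono r2" "\<forall>i<M. convergent (\<lambda>k. L (r1 (r2 k)) i)"
    using bounded_subseq[of M "\<lambda>k i. L (r1 k) i" "\<bar>v!0\<bar> + d + 2"] Lb by auto
  define r where "r = r1 \<circ> r2"
  have r: "strict_mono r" using r1 r2 by (simp add: r_def strict_mono_o)
  have cT: "convergent (\<lambda>k. T (r k) i)" if "i < M" for i
    using convergent_subseq_convergent[OF r1(2)[rule_format, OF that] r2(1)] by (simp add: r_def o_def)
  have cL: "convergent (\<lambda>k. L (r k) i)" if "i < M" for i
    using r2(2) that by (simp add: r_def o_def)
  define T' where "T' i = lim (\<lambda>k. T (r k) i)" for i
  define L' where "L' i = lim (\<lambda>k. L (r k) i)" for i
  have Tl: "(\<lambda>k. T (r k) i) \<longlonglongrightarrow> T' i" if "i < M" for i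
    using cT[OF that] by (simp add: T'_def convergent_LIMSEQ_iff)
  have Ll: "(\<lambda>k. L (r k) i) \<longlonglongrightarrow> L' i" if "i < M" for i
    using cL[OF that] by (simp add: L'_def convergent_LIMSEQ_iff)
  have admT': "adm a b M T' L'"
    unfolding adm_def
  proof (intro allI impI conjI)
    fix i assume i: "i < M"
    have h: "a \<le> T (r k) i" "T (r k) i \<le> b" "0 \<le> L (r k) i" for k using TL(1)[of "r k"] i by (auto simp: adm_def)
    show "a \<le> T' i" by (rule LIMSEQ_le_const[OF Tl[OF i]]) (use h in auto)
    show "T' i \<le> b" by (rule LIMSEQ_le_const2[OF Tl[OF i]]) (use h in auto)
    show "0 \<le> L' i" by (rule LIMSEQ_le_const[OF Ll[OF i]]) (use h in auto)
  qed
  have mlim: "(\<lambda>k. mom (T (r k)) (L (r k)) M j) \<longlonglongrightarrow> mom T' L' M j" for j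
    unfolding mom_def by (intro tendsto_sum tendsto_mult tendsto_power) (auto simp: Tl Ll)
  have Dlim: "(\<lambda>k. D (T (r k)) (L (r k))) \<longlonglongrightarrow> D T' L'"
    unfolding D_def by (intro tendsto_sum tendsto_power tendsto_diff tendsto_const mlim)
  have Dlim2: "(\<lambda>k. D (T (r k)) (L (r k))) \<longlonglongrightarrow> d"
  proof (rule tendsto_sandwich[where f = "\<lambda>_. d" and h = "\<lambda>k. d + inverse (real (Suc k))"])
    show "\<forall>\<^sub>F k in sequentially. d \<le> D (T (r k)) (L (r k))" using dle TL(1) by auto
    show "\<forall>\<^sub>F k in sequentially. D (T (r k)) (L (r k)) \<le> d + inverse (real (Suc k))"
    proof (intro always_eventually allI)
      fix k
      have "k \<le> r k" using r by (rule seq_suble)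
      then have "inverse (real (Suc (r k))) \<le> inverse (real (Suc k))"
        by (intro le_imp_inverse_le) auto
      then show "D (T (r k)) (L (r k)) \<le> d + inverse (real (Suc k))" using TL(2)[of "r k"] by linarith
    qed
    show "(\<lambda>_. d) \<longlonglongrightarrow> d" by simp
    show "(\<lambda>k. d + inverse (real (Suc k))) \<longlonglongrightarrow> d"
      using tendsto_add[OF tendsto_const[of d] LIMSEQ_inverse_real_of_nat] by simp
  qed
  have Dopt: "D T' L' = d" using LIMSEQ_unique[OF Dlim Dlim2] .
  have opt: "D T' L' \<le> D t l" if "adm a b M t l" for t l using dle[OF that] Dopt by simp
  define c where "c j = mom T' L' M j" for j
  define e where "e j = v!j - c j" for j
  have DT': "D T' L' = (\<Sum>j\<le>m. (e j)\<^sup>2)" by (simp add: D_def e_def c_def)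
  have pt: "(\<Sum>j\<le>m. (c j - v!j) * x ^ j) \<ge> 0" if x: "a \<le> x" "x \<le> b" for x
  proof -
    have "(\<Sum>j\<le>m. e j * x ^ j) \<le> 0"
    proof (rule eps_le0[where Y = "(\<Sum>j\<le>m. (x ^ j)\<^sup>2) / 2"], intro allI impI)
      fix \<epsilon> :: real assume \<epsilon>: "0 < \<epsilon> \<and> \<epsilon> < 1"
      have adm2: "adm a b (Suc M) (T'(M := x)) (L'(M := \<epsilon>))"
        using admT' x \<epsilon> by (auto simp: adm_def less_Suc_eq)
      obtain t2 l2 where t2: "adm a b M t2 l2" "\<forall>j<M. mom t2 l2 M j = mom (T'(M := x)) (L'(M := \<epsilon>)) (Suc M) j"
        using reduce_step[OF adm2] by (auto simp: M_def)
      have "D t2 l2 = (\<Sum>j\<le>m. (e j - \<epsilon> * x ^ j)\<^sup>2)"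
        unfolding D_def using t2(2) by (intro sum.cong) (auto simp: mom_upd e_def c_def M_def algebra_simps)
      also have "\<dots> = (\<Sum>j\<le>m. (e j)\<^sup>2) - 2 * \<epsilon> * (\<Sum>j\<le>m. e j * x ^ j) + \<epsilon>\<^sup>2 * (\<Sum>j\<le>m. (x ^ j)\<^sup>2)"
        by (rule sq_expand)
      finally have "(\<Sum>j\<le>m. (e j)\<^sup>2) \<le> (\<Sum>j\<le>m. (e j)\<^sup>2) - 2 * \<epsilon> * (\<Sum>j\<le>m. e j * x ^ j) + \<epsilon>\<^sup>2 * (\<Sum>j\<le>m. (x ^ j)\<^sup>2)"
        using opt[OF t2(1)] DT' by simp
      then have "2 * \<epsilon> * (\<Sum>j\<le>m. e j * x ^ j) \<le> \<epsilon> * (\<epsilon> * (\<Sum>j\<le>m. (x ^ j)\<^sup>2))"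
        by (simp add: power2_eq_square algebra_simps)
      then have "2 * (\<Sum>j\<le>m. e j * x ^ j) \<le> \<epsilon> * (\<Sum>j\<le>m. (x ^ j)\<^sup>2)"
        using \<epsilon> by (simp add: mult.assoc)
      then show "(\<Sum>j\<le>m. e j * x ^ j) \<le> \<epsilon> * ((\<Sum>j\<le>m. (x ^ j)\<^sup>2) / 2)" by simp
    qed
    moreover have "(\<Sum>j\<le>m. (c j - v!j) * x ^ j) = - (\<Sum>j\<le>m. e j * x ^ j)"
      unfolding sum_negf[symmetric] by (intro sum.cong) (auto simp: e_def algebra_simps)
    ultimately show ?thesis by linarith
  qed
  have scal: "(\<Sum>j\<le>m. e j * (\<sigma> * c j)) \<le> 0" if \<sigma>: "\<sigma> = 1 \<or> \<sigma> = -1" for \<sigma> :: real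
  proof (rule eps_le0[where Y = "(\<Sum>j\<le>m. (\<sigma> * c j)\<^sup>2) / 2"], intro allI impI)
    fix \<epsilon> :: real assume \<epsilon>: "0 < \<epsilon> \<and> \<epsilon> < 1"
    have adm2: "adm a b M T' (\<lambda>i. (1 + \<epsilon> * \<sigma>) * L' i)"
      using admT' \<epsilon> \<sigma> by (auto simp: adm_def)
    have "D T' (\<lambda>i. (1 + \<epsilon> * \<sigma>) * L' i) = (\<Sum>j\<le>m. (e j - \<epsilon> * (\<sigma> * c j))\<^sup>2)"
      unfolding D_def mom_scale by (intro sum.cong) (auto simp: e_def c_def algebra_simps)
    also have "\<dots> = (\<Sum>j\<le>m. (e j)\<^sup>2) - 2 * \<epsilon> * (\<Sum>j\<le>m. e j * (\<sigma> * c j)) + \<epsilon>\<^sup>2 * (\<Sum>j\<le>m. (\<sigma> * c j)\<^sup>2)"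
      by (rule sq_expand)
    finally have "(\<Sum>j\<le>m. (e j)\<^sup>2) \<le> (\<Sum>j\<le>m. (e j)\<^sup>2) - 2 * \<epsilon> * (\<Sum>j\<le>m. e j * (\<sigma> * c j)) + \<epsilon>\<^sup>2 * (\<Sum>j\<le>m. (\<sigma> * c j)\<^sup>2)"
      using opt[OF adm2] DT' by simp
    then have "2 * \<epsilon> * (\<Sum>j\<le>m. e j * (\<sigma> * c j)) \<le> \<epsilon> * (\<epsilon> * (\<Sum>j\<le>m. (\<sigma> * c j)\<^sup>2))"
      by (simp add: power2_eq_square algebra_simps)
    then have "2 * (\<Sum>j\<le>m. e j * (\<sigma> * c j)) \<le> \<epsilon> * (\<Sum>j\<le>m. (\<sigma> * c j)\<^sup>2)"
      using \<epsilon> by (simp add: mult.assoc)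
    then show "(\<Sum>j\<le>m. e j * (\<sigma> * c j)) \<le> \<epsilon> * ((\<Sum>j\<le>m. (\<sigma> * c j)\<^sup>2) / 2)" by simp
  qed
  have ec: "(\<Sum>j\<le>m. e j * c j) = 0"
  proof -
    have "(\<Sum>j\<le>m. e j * c j) \<le> 0" using scal[of 1] by simp
    moreover have "- (\<Sum>j\<le>m. e j * c j) \<le> 0" using scal[of "-1"] by (simp add: sum_negf)
    ultimately show ?thesis by linarith
  qed
  define p where "p = pol (\<lambda>j. c j - v!j) m"
  have "moment_functional v p \<ge> 0"
    using pos unfolding positive_on_def
  proof (elim allE impE)
    show "degree p + 1 \<le> length v" using pol_degree[of _ m] len by (simp add: p_def)
    show "\<forall>x\<in>{a..b}. 0 \<le> poly p x" using pt by (simp add: p_def pol_poly)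
  qed
  moreover have "moment_functional v p = (\<Sum>j\<le>m. (c j - v!j) * v!j)"
    by (simp add: moment_functional_def len p_def pol_coeff lessThan_Suc_atMost)
  moreover have "(\<Sum>j\<le>m. (c j - v!j) * v!j) = - (\<Sum>j\<le>m. (e j)\<^sup>2)"
  proof -
    have "(\<Sum>j\<le>m. (c j - v!j) * v!j) = (\<Sum>j\<le>m. - (e j)\<^sup>2 - e j * c j)"
      by (intro sum.cong) (auto simp: e_def power2_eq_square algebra_simps)
    also have "\<dots> = - (\<Sum>j\<le>m. (e j)\<^sup>2) - (\<Sum>j\<le>m. e j * c j)"
      by (simp add: sum_subtractf sum_negf)
    finally show ?thesis using ec by simp
  qed
  ultimately have "(\<Sum>j\<le>m. (e j)\<^sup>2) \<le> 0" by linarith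
  moreover have "(\<Sum>j\<le>m. (e j)\<^sup>2) \<ge> 0" by (intro sum_nonneg) auto
  ultimately have "(\<Sum>j\<le>m. (e j)\<^sup>2) = 0" by linarith
  then have "\<forall>j\<in>{..m}. (e j)\<^sup>2 = 0"
    by (subst sum_nonneg_eq_0_iff[symmetric]) auto
  then have "\<forall>j\<le>m. c j = v!j" by (auto simp: e_def)
  then show ?thesis using admT' by (auto simp: M_def c_def)
qed

lemma poly_pos_near:
  fixes g :: "real poly"
  assumes "poly g x > 0"
  shows "\<exists>d>0. \<forall>y. \<bar>y - x\<bar> < d \<longrightarrow> poly g y > 0"
proof -
  have "(\<lambda>y. poly g y) \<midarrow>x\<rightarrow> poly g x" using poly_isCont[of x g] by (simp add: isCont_def)
  then obtain s where s: "s > 0" "\<forall>y. y \<noteq> x \<and> norm (y - x) < s \<longrightarrow> norm (poly g y - poly g x) < poly g x"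
    using assms unfolding LIM_eq by blast
  show ?thesis
  proof (intro exI[of _ s] conjI allI impI)
    fix y assume y: "\<bar>y - x\<bar> < s"
    show "poly g y > 0"
    proof (cases "y = x")
      case False then have "\<bar>poly g y - poly g x\<bar> < poly g x" using s y by auto
      then show ?thesis by linarith
    qed (use assms in simp)
  qed (use s in simp)
qed

lemma poly_nonzero_near:
  fixes g :: "real poly"
  assumes "poly g x \<noteq> 0"
  shows "\<exists>d>0. \<forall>y. \<bar>y - x\<bar> < d \<longrightarrow> poly g y * poly g x > 0"
proof (cases "poly g x > 0")
  case True
  then obtain d where "d > 0" "\<forall>y. \<bar>y - x\<bar> < d \<longrightarrow> poly g y > 0" using poly_pos_near by blast
  then show ?thesis using True by (intro exI[of _ d]) auto
next
  case False
  then have "poly (-g) x > 0" using assms by simp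
  then obtain d where "d > 0" "\<forall>y. \<bar>y - x\<bar> < d \<longrightarrow> poly (-g) y > 0" using poly_pos_near by blast
  then show ?thesis using False assms by (intro exI[of _ d]) (auto simp: mult_neg_neg)
qed

lemma double_root:
  fixes p :: "real poly"
  assumes nn: "\<forall>y\<in>{a..b}. poly p y \<ge> 0" and x: "a < x" "x < b" and px: "poly p x = 0"
  shows "\<exists>h. p = [:-x, 1:]^2 * h \<and> (\<forall>y\<in>{a..b}. poly h y \<ge> 0)"
proof -
  obtain g where g: "p = [:-x, 1:] * g" using px by (metis dvdE poly_eq_0_iff_dvd)
  have gx: "poly g x = 0"
  proof (rule ccontr)
    assume "poly g x \<noteq> 0"
    then obtain d where d: "d > 0" "\<forall>y. \<bar>y - x\<bar> < d \<longrightarrow> poly g y * poly g x > 0"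
      using poly_nonzero_near by blast
    show False
    proof (cases "poly g x > 0")
      case True
      define y where "y = x - min d (x - a) / 2"
      have y: "a \<le> y" "y \<le> b" "y < x" "\<bar>y - x\<bar> < d" using d(1) x by (auto simp: y_def min_def field_simps)
      then have "poly g y > 0" using d(2)[rule_format, OF y(4)] True by (auto simp: zero_less_mult_iff)
      then have "poly p y < 0" using y by (simp add: g mult_neg_pos)
      then show False using nn[rule_format, of y] y by simp
    next
      case False
      then have neg: "poly g x < 0" using \<open>poly g x \<noteq> 0\<close> by simp
      define y where "y = x + min d (b - x) / 2"
      have y: "a \<le> y" "y \<le> b" "y > x" "\<bar>y - x\<bar> < d" using d(1) x by (auto simp: y_def min_def field_simps)
      then have "poly g y < 0" using d(2)[rule_format, OF y(4)] neg by (auto simp: zero_less_mult_iff)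
      then have "poly p y < 0" using y by (simp add: g mult_pos_neg)
      then show False using nn[rule_format, of y] y by simp
    qed
  qed
  obtain h where h: "g = [:-x, 1:] * h" using gx by (metis dvdE poly_eq_0_iff_dvd)
  have p2: "p = [:-x, 1:]^2 * h" by (simp only: g h power2_eq_square mult.assoc)
  have hy: "poly h y \<ge> 0" if y: "y \<in> {a..b}" "y \<noteq> x" for y
  proof -
    have "poly p y = (y - x)^2 * poly h y" by (simp add: p2)
    moreover have "(y - x)^2 > 0" using y by simp
    ultimately show ?thesis using nn y by (metis zero_le_mult_iff not_less)
  qed
  have "poly h x \<ge> 0"
  proof (rule ccontr)
    assume "\<not> poly h x \<ge> 0"
    then have "poly (-h) x > 0" by simp
    then obtain d where d: "d > 0" "\<forall>y. \<bar>y - x\<bar> < d \<longrightarrow> poly (-h) y > 0" using poly_pos_near by blast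
    define y where "y = x + min d (b - x) / 2"
    have y: "a \<le> y" "y \<le> b" "y \<noteq> x" "\<bar>y - x\<bar> < d" using d(1) x by (auto simp: y_def min_def field_simps)
    then show False using d hy[of y] by auto
  qed
  then show ?thesis using p2 hy by (intro exI[of _ h]) (metis atLeastAtMost_iff)
qed

lemma roots_force_zero:
  fixes p :: "real poly"
  assumes "finite F"
  shows "\<forall>y\<in>{a..1}. poly p y \<ge> 0 \<Longrightarrow> F \<subseteq> {a<..<1} \<Longrightarrow> \<forall>x\<in>F. poly p x = 0 \<Longrightarrow>
    (e \<Longrightarrow> poly p 1 = 0) \<Longrightarrow> degree p < 2 * card F + (if e then 1 else 0) \<Longrightarrow> p = 0"
  using assms
proof (induction F arbitrary: p rule: finite_induct)
  case empty
  then have e: e and d: "degree p = 0" by (auto split: if_splits)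
  then obtain c where "p = [:c:]" by (metis degree_eq_zeroE)
  then show ?case using empty(4)[OF e] by simp
next
  case (insert x F)
  have x: "a < x" "x < 1" using insert.prems(2) by auto
  obtain h where h: "p = [:-x, 1:]^2 * h" "\<forall>y\<in>{a..1}. poly h y \<ge> 0"
    using double_root[OF insert.prems(1) x] insert.prems(3) by auto
  show ?case
  proof (cases "h = 0")
    case True then show ?thesis by (simp add: h)
  next
    case hnz: False
  have "h = 0"
  proof (rule insert.IH)
    show "\<forall>y\<in>{a..1}. 0 \<le> poly h y" by fact
    show "F \<subseteq> {a<..<1}" using insert.prems(2) by auto
    show "\<forall>z\<in>F. poly h z = 0"
    proof
      fix z assume z: "z \<in> F"
      then have "z \<noteq> x" using insert.hyps by auto
      moreover have "poly p z = 0" using insert.prems(3) z by auto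
      ultimately show "poly h z = 0" by (simp add: h)
    qed
    show "poly h 1 = 0" if e
    proof -
      have "poly p 1 = 0" using insert.prems(4) that .
      then show ?thesis using x by (simp add: h)
    qed
    show "degree h < 2 * card F + (if e then 1 else 0)"
    proof -
      have "degree p = 2 + degree h" using hnz by (simp add: h degree_mult_eq degree_power_eq)
      then show ?thesis using insert.prems(5) insert.hyps by simp
    qed
  qed
  then show ?thesis using hnz by simp
  qed
qed

lemma poly_le_deg:
  fixes p :: "real poly"
  assumes "degree p \<le> L"
  shows "poly p y = (\<Sum>j\<le>L. coeff p j * y ^ j)"
proof -
  have "poly p y = (\<Sum>j\<le>degree p. coeff p j * y ^ j)" by (rule poly_altdef)
  also have "\<dots> = (\<Sum>j\<le>L. coeff p j * y ^ j)"
    using assms by (intro sum.mono_neutral_left) (auto simp: coeff_eq_0)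
  finally show ?thesis .
qed

lemma margin:
  fixes S :: "real set" and \<omega> :: "real \<Rightarrow> real" and a :: real and L :: nat
  assumes fin: "finite S" and pos: "\<forall>x\<in>S. \<omega> x > 0" and Ssub: "S \<subseteq> {a<..1}"
    and deg: "L < 2 * card (S \<inter> {..<1}) + (if 1 \<in> S then 1 else 0)"
  shows "\<exists>\<delta>>0. \<forall>p. degree p \<le> L \<longrightarrow> (\<forall>y\<in>{a..1}. poly p y \<ge> 0) \<longrightarrow>
            \<delta> * \<bar>coeff p 0\<bar> \<le> (\<Sum>x\<in>S. \<omega> x * poly p x)"
proof (rule ccontr)
  define \<Phi> where "\<Phi> p = (\<Sum>x\<in>S. \<omega> x * poly p x)" for p
  have \<Phi>nn: "\<Phi> p \<ge> 0" if "\<forall>y\<in>{a..1}. poly p y \<ge> 0" for p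
    unfolding \<Phi>_def using that pos Ssub by (intro sum_nonneg) (force intro!: mult_nonneg_nonneg)
  assume "\<not> ?thesis"
  then have "\<forall>\<delta>>0. \<exists>p. degree p \<le> L \<and> (\<forall>y\<in>{a..1}. poly p y \<ge> 0) \<and> \<Phi> p < \<delta> * \<bar>coeff p 0\<bar>"
    by (auto simp: \<Phi>_def not_le)
  then have "\<forall>k. \<exists>p. degree p \<le> L \<and> (\<forall>y\<in>{a..1}. poly p y \<ge> 0) \<and> \<Phi> p < inverse (real (Suc k)) * \<bar>coeff p 0\<bar>"
    by auto
  then obtain P where P: "\<And>k. degree (P k) \<le> L" "\<And>k. \<forall>y\<in>{a..1}. poly (P k) y \<ge> 0"
      "\<And>k. \<Phi> (P k) < inverse (real (Suc k)) * \<bar>coeff (P k) 0\<bar>"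
    by metis
  define \<sigma> where "\<sigma> k = (\<Sum>j\<le>L. \<bar>coeff (P k) j\<bar>)" for k
  have Pnz: "P k \<noteq> 0" for k
  proof
    assume "P k = 0"
    then show False using P(3)[of k] by (simp add: \<Phi>_def)
  qed
  have \<sigma>pos: "\<sigma> k > 0" for k
  proof -
    have "coeff (P k) (degree (P k)) \<noteq> 0" using Pnz by simp
    then have "0 < \<bar>coeff (P k) (degree (P k))\<bar>" by simp
    also have "\<dots> \<le> \<sigma> k" unfolding \<sigma>_def using P(1)[of k] by (intro member_le_sum) auto
    finally show ?thesis .
  qed
  define Q where "Q k = smult (1 / \<sigma> k) (P k)" for k
  have Qc: "coeff (Q k) j = coeff (P k) j / \<sigma> k" for k j by (simp add: Q_def)
  have Qdeg: "degree (Q k) \<le> L" for k using P(1)[of k] by (simp add: Q_def)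
  have Qnn: "\<forall>y\<in>{a..1}. poly (Q k) y \<ge> 0" for k using P(2)[of k] \<sigma>pos[of k] by (simp add: Q_def)
  have Qsum: "(\<Sum>j\<le>L. \<bar>coeff (Q k) j\<bar>) = 1" for k
  proof -
    have "(\<Sum>j\<le>L. \<bar>coeff (Q k) j\<bar>) = (\<Sum>j\<le>L. \<bar>coeff (P k) j\<bar>) / \<sigma> k"
      using \<sigma>pos[of k] by (simp add: Qc sum_divide_distrib)
    then show ?thesis using \<sigma>pos[of k] by (simp add: \<sigma>_def)
  qed
  have Qb: "\<bar>coeff (Q k) j\<bar> \<le> 1" for k j
  proof (cases "j \<le> L")
    case True
    then have "\<bar>coeff (Q k) j\<bar> \<le> (\<Sum>j\<le>L. \<bar>coeff (Q k) j\<bar>)" by (intro member_le_sum) auto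
    then show ?thesis using Qsum by simp
  next
    case False then show ?thesis using Qdeg[of k] by (simp add: coeff_eq_0)
  qed
  have QPhi: "\<Phi> (Q k) \<le> inverse (real (Suc k))" for k
  proof -
    have "\<Phi> (Q k) = \<Phi> (P k) / \<sigma> k" by (simp add: \<Phi>_def Q_def sum_divide_distrib)
    also have "\<dots> \<le> inverse (real (Suc k)) * \<bar>coeff (P k) 0\<bar> / \<sigma> k"
      using P(3)[of k] \<sigma>pos[of k] by (intro divide_right_mono) auto
    also have "\<dots> = inverse (real (Suc k)) * \<bar>coeff (Q k) 0\<bar>" using \<sigma>pos[of k] by (simp add: Qc)
    also have "\<dots> \<le> inverse (real (Suc k)) * 1" using Qb[of k 0] by (intro mult_left_mono) auto
    finally show ?thesis by simp
  qed
  obtain r where r: "strict_mono r" "\<forall>j<Suc L. convergent (\<lambda>k. coeff (Q (r k)) j)"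
    using bounded_subseq[of "Suc L" "\<lambda>k j. coeff (Q k) j" 1] Qb by auto
  define c where "c j = lim (\<lambda>k. coeff (Q (r k)) j)" for j
  have cl: "(\<lambda>k. coeff (Q (r k)) j) \<longlonglongrightarrow> c j" if "j \<le> L" for j
    using r(2) that by (simp add: c_def convergent_LIMSEQ_iff)
  define ps where "ps = pol c L"
  have plim: "(\<lambda>k. poly (Q (r k)) y) \<longlonglongrightarrow> poly ps y" for y
  proof -
    have "(\<lambda>k. \<Sum>j\<le>L. coeff (Q (r k)) j * y ^ j) \<longlonglongrightarrow> (\<Sum>j\<le>L. c j * y ^ j)"
      by (intro tendsto_sum tendsto_mult tendsto_const) (auto simp: cl)
    then show ?thesis using Qdeg by (simp add: poly_le_deg[of _ L] ps_def pol_poly)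
  qed
  have psnn: "\<forall>y\<in>{a..1}. poly ps y \<ge> 0"
  proof
    fix y assume y: "y \<in> {a..1}"
    show "poly ps y \<ge> 0" by (rule LIMSEQ_le_const[OF plim]) (use Qnn y in auto)
  qed
  have Phil: "(\<lambda>k. \<Phi> (Q (r k))) \<longlonglongrightarrow> \<Phi> ps"
    unfolding \<Phi>_def by (intro tendsto_sum tendsto_mult tendsto_const plim)
  have Phil0: "(\<lambda>k. \<Phi> (Q (r k))) \<longlonglongrightarrow> 0"
  proof (rule tendsto_sandwich[where f = "\<lambda>_. 0" and h = "\<lambda>k. inverse (real (Suc k))"])
    show "\<forall>\<^sub>F k in sequentially. 0 \<le> \<Phi> (Q (r k))" using \<Phi>nn Qnn by auto
    show "\<forall>\<^sub>F k in sequentially. \<Phi> (Q (r k)) \<le> inverse (real (Suc k))"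
    proof (intro always_eventually allI)
      fix k
      have "k \<le> r k" using r(1) by (rule seq_suble)
      then have "inverse (real (Suc (r k))) \<le> inverse (real (Suc k))"
        by (intro le_imp_inverse_le) auto
      then show "\<Phi> (Q (r k)) \<le> inverse (real (Suc k))" using QPhi[of "r k"] by linarith
    qed
    show "(\<lambda>_. 0) \<longlonglongrightarrow> (0::real)" by simp
    show "(\<lambda>k. inverse (real (Suc k))) \<longlonglongrightarrow> 0" by (rule LIMSEQ_inverse_real_of_nat)
  qed
  have Phi0: "\<Phi> ps = 0" using LIMSEQ_unique[OF Phil Phil0] .
  have csum: "(\<Sum>j\<le>L. \<bar>c j\<bar>) = 1"
  proof -
    have "(\<lambda>k. \<Sum>j\<le>L. \<bar>coeff (Q (r k)) j\<bar>) \<longlonglongrightarrow> (\<Sum>j\<le>L. \<bar>c j\<bar>)"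
      by (intro tendsto_sum tendsto_rabs) (auto simp: cl)
    moreover have "(\<lambda>k. \<Sum>j\<le>L. \<bar>coeff (Q (r k)) j\<bar>) = (\<lambda>_. 1)" using Qsum by simp
    ultimately show ?thesis using LIMSEQ_unique tendsto_const by metis
  qed
  have psnz: "ps \<noteq> 0"
  proof
    assume "ps = 0"
    then have "\<forall>j\<le>L. c j = 0" using pol_coeff[of c L] by (metis coeff_0 ps_def)
    then show False using csum by simp
  qed
  have rootsS: "\<forall>x\<in>S. poly ps x = 0"
  proof -
    have "\<forall>x\<in>S. \<omega> x * poly ps x = 0"
      using Phi0 unfolding \<Phi>_def
      by (subst sum_nonneg_eq_0_iff[OF fin, symmetric])
         (use psnn pos Ssub in \<open>force intro!: mult_nonneg_nonneg\<close>)+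
    then show ?thesis using pos by (metis less_irrefl mult_eq_0_iff)
  qed
  have "ps = 0"
  proof (rule roots_force_zero[of "S \<inter> {..<1}" a ps "1 \<in> S"])
    show "finite (S \<inter> {..<1})" using fin by simp
    show "\<forall>y\<in>{a..1}. 0 \<le> poly ps y" by (rule psnn)
    show "S \<inter> {..<1} \<subseteq> {a<..<1}" using Ssub by auto
    show "\<forall>x\<in>S \<inter> {..<1}. poly ps x = 0" using rootsS by auto
    show "poly ps 1 = 0" if "1 \<in> S" using rootsS that by auto
    show "degree ps < 2 * card (S \<inter> {..<1}) + (if 1 \<in> S then 1 else 0)"
      using pol_degree[of c L] deg by (simp add: ps_def)
  qed
  then show False using psnz by simp
qed

lemma atoms_of_adm:
  assumes "adm a b M t l"
  shows "\<exists>S w. finite S \<and> S \<subseteq> {a..b} \<and> (\<forall>x\<in>S. w x > 0) \<and> (\<forall>j. (\<Sum>x\<in>S. w x * x ^ j) = mom t l M j)"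
proof -
  define I where "I = {i. i < M \<and> l i > 0}"
  define S where "S = t ` I"
  define w where "w x = sum l {i\<in>I. t i = x}" for x
  have finI: "finite I" by (simp add: I_def)
  show ?thesis
  proof (intro exI[of _ S] exI[of _ w] conjI ballI allI)
    show "finite S" using finI by (simp add: S_def)
    show "S \<subseteq> {a..b}" using assms by (auto simp: S_def I_def adm_def)
    fix x assume "x \<in> S"
    then obtain i0 where i0: "i0 \<in> I" "t i0 = x" by (auto simp: S_def)
    show "w x > 0" unfolding w_def
      using finI i0 by (intro sum_pos2[of _ i0]) (auto simp: I_def)
  next
    fix j
    have "mom t l M j = (\<Sum>i\<in>I. l i * t i ^ j)"
      unfolding mom_def using assms
      by (intro sum.mono_neutral_right) (auto simp: I_def adm_def order.order_iff_strict)
    also have "\<dots> = (\<Sum>x\<in>S. \<Sum>i\<in>{i\<in>I. t i = x}. l i * t i ^ j)"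
      unfolding S_def by (rule sum.image_gen[OF finI])
    also have "\<dots> = (\<Sum>x\<in>S. w x * x ^ j)"
      unfolding w_def by (intro sum.cong refl) (simp add: sum_distrib_right)
    finally show "(\<Sum>x\<in>S. w x * x ^ j) = mom t l M j" by simp
  qed
qed

lemma amu_in_mm:
  assumes fin: "finite S" and sub: "S \<subseteq> {a..b}" and nn: "\<forall>x\<in>S. w x \<ge> 0"
    and mo: "\<forall>j<length v. (\<Sum>x\<in>S. w x * x ^ j) = v ! j"
  shows "amu S w \<in> moment_measures v a b"
  unfolding moment_measures_def
proof (intro CollectI conjI allI impI)
  show "sets (amu S w) = sets borel" by simp
  show "finite_measure (amu S w)" using fin by (rule amu_finite_measure)
  have "S \<inter> - {a..b} = {}" using sub by auto
  then show "emeasure (amu S w) (- {a..b}) = 0" using fin by (simp add: amu_emeasure)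
  fix k assume k: "k < length v"
  show "integrable (amu S w) (\<lambda>x. x ^ k)" using fin nn by (intro amu_integrable) auto
  show "(\<integral>x. x ^ k \<partial>amu S w) = v ! k" using amu_integral[OF fin nn, of "\<lambda>x. x ^ k"] mo k by simp
qed

lemma q_poly:
  fixes F :: "real set" and e :: bool
  assumes fin: "finite F" and sub: "F \<subseteq> {0<..<1}"
  shows "\<exists>q. (\<forall>j\<ge>2 * card F + (if e then 1 else 0). coeff q j = 0) \<and> (\<forall>x\<in>F. x * poly q x = 1)
            \<and> (e \<longrightarrow> poly q 1 = 1) \<and> (\<forall>t\<in>{0<..1}. poly q t \<le> 1 / t)"
proof -
  define K where "K = 2 * card F + (if e then 1 else 0)"
  define P where "P = (\<Prod>x\<in>F. [:-x, 1:]^2) * (if e then [:1, -1:] else 1)"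
  have polyP: "poly P t = (\<Prod>x\<in>F. (t - x)^2) * (if e then 1 - t else 1)" for t
    by (simp add: P_def poly_prod)
  have degP: "degree P \<le> K"
  proof -
    have "degree P \<le> degree (\<Prod>x\<in>F. [:-x, 1:]^2) + degree (if e then [:1, -1:] else (1::real poly))"
      unfolding P_def by (rule degree_mult_le)
    also have "degree (\<Prod>x\<in>F. [:-x, 1:]^2) = (\<Sum>x\<in>F. degree ([:-x, 1:]^2))"
      by (rule degree_prod_eq_sum_degree) auto
    also have "\<dots> = 2 * card F" by (simp add: degree_power_eq)
    finally show ?thesis by (cases e) (simp_all add: K_def)
  qed
  define P0 where "P0 = poly P 0"
  have P0: "P0 > 0"
  proof -
    have "(\<Prod>x\<in>F. (0 - x)^2) > 0" using sub by (intro prod_pos) auto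
    then show ?thesis by (simp add: P0_def polyP)
  qed
  have Pnn: "poly P t \<ge> 0" if "t \<le> 1" for t
    using that by (simp add: polyP prod_nonneg)
  have PF: "poly P x = 0" if "x \<in> F" for x
    using that fin by (simp add: polyP prod_zero_iff)
  have P1: "poly P 1 = 0" if e using that by (simp add: polyP)
  define R where "R = 1 - smult (1 / P0) P"
  have polyR: "poly R t = 1 - poly P t / P0" for t by (simp add: R_def)
  have "poly R 0 = 0" using P0 by (simp add: polyR P0_def)
  then have "[:-0, 1:] dvd R" by (simp only: poly_eq_0_iff_dvd)
  then obtain q where q: "R = [:0, 1:] * q" by (auto elim: dvdE)
  have polyq: "t * poly q t = 1 - poly P t / P0" for t
    using polyR[of t] by (simp add: q)
  have degR: "degree R \<le> K"
  proof -
    have "degree R \<le> max (degree (1::real poly)) (degree (smult (1 / P0) P))"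
      unfolding R_def by (rule degree_diff_le_max)
    also have "\<dots> \<le> K" using degP by (simp add: order.trans[OF degree_smult_le])
    finally show ?thesis .
  qed
  show ?thesis
  proof (intro exI[of _ q] conjI allI impI ballI)
    fix j assume j0: "2 * card F + (if e then 1 else 0) \<le> j"
    then have j: "K \<le> j" by (simp add: K_def)
    show "coeff q j = 0"
    proof (cases "q = 0")
      case False
      then have "degree R = Suc (degree q)" by (simp add: q degree_mult_eq)
      then have "degree q < j" using degR j by simp
      then show ?thesis by (simp add: coeff_eq_0)
    qed simp
  next
    fix x assume "x \<in> F"
    then show "x * poly q x = 1" using polyq[of x] PF by simp
  next
    assume e then show "poly q 1 = 1" using polyq[of 1] P1 by simp
  next
    fix t :: real assume t: "t \<in> {0<..1}"
    have "t * poly q t \<le> 1" using polyq[of t] Pnn[of t] P0 t by (simp add: divide_nonneg_pos)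
    then show "poly q t \<le> 1 / t" using t by (simp add: le_divide_eq mult.commute)
  qed
qed

lemma poly_lt:
  fixes q :: "real poly"
  assumes "\<forall>j\<ge>K. coeff q j = 0"
  shows "poly q x = (\<Sum>j<K. coeff q j * x ^ j)"
proof (cases K)
  case 0
  then have "q = 0" using assms by (intro poly_eqI) auto
  then show ?thesis using 0 by simp
next
  case (Suc L)
  have "degree q \<le> L" using assms Suc by (intro degree_le) auto
  then have "poly q x = (\<Sum>j\<le>L. coeff q j * x ^ j)" by (rule poly_le_deg)
  then show ?thesis using Suc by (simp add: lessThan_Suc_atMost)
qed

lemma lower_bound:
  fixes u :: "real list" and q :: "real poly"
  assumes nu: "\<nu> \<in> moment_measures u a b" and a: "0 < a" and b: "b \<le> 1"
    and qc: "\<forall>j\<ge>length u. coeff q j = 0" and qle: "\<forall>t\<in>{0<..1}. poly q t \<le> 1 / t"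
  shows "(\<Sum>j<length u. coeff q j * u ! j) \<le> (\<integral>t. 1 / t \<partial>\<nu>)"
proof -
  have sets: "sets \<nu> = sets borel" and fm: "finite_measure \<nu>" and null: "emeasure \<nu> (- {a..b}) = 0"
    and mo: "\<And>k. k < length u \<Longrightarrow> integrable \<nu> (\<lambda>x. x ^ k) \<and> (\<integral>x. x ^ k \<partial>\<nu>) = u ! k"
    using nu by (auto simp: moment_measures_def)
  interpret finite_measure \<nu> by fact
  have sp: "space \<nu> = UNIV" using sets_eq_imp_space_eq[OF sets] by simp
  have cs: "- {a..b} \<in> sets \<nu>" using sets by simp
  have ae: "AE x in \<nu>. x \<in> {a..b}"
    by (rule AE_I'[of "- {a..b}"]) (use cs null in \<open>auto simp: null_sets_def\<close>)
  have pq: "(\<lambda>x. poly q x) = (\<lambda>x. \<Sum>j<length u. coeff q j * x ^ j)"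
    using poly_lt[OF qc] by auto
  have intq: "integrable \<nu> (\<lambda>x. poly q x)"
    unfolding pq using mo by (intro Bochner_Integration.integrable_sum integrable_mult_right) auto
  have intq2: "(\<integral>x. poly q x \<partial>\<nu>) = (\<Sum>j<length u. coeff q j * u ! j)"
    unfolding pq using mo by (subst Bochner_Integration.integral_sum) auto
  have meas: "(\<lambda>t::real. 1 / t) \<in> borel_measurable \<nu>"
    using sets by (simp add: measurable_cong_sets[OF sets refl])
  have int1: "integrable \<nu> (\<lambda>t::real. 1 / t)"
  proof (rule integrable_const_bound[where B = "1 / a"])
    show "AE x in \<nu>. norm (1 / x) \<le> 1 / a"
      using ae by eventually_elim (use a in \<open>auto simp: divide_simps\<close>)
  qed (rule meas)
  have "(\<integral>x. poly q x \<partial>\<nu>) \<le> (\<integral>t. 1 / t \<partial>\<nu>)"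
  proof (intro integral_mono_AE intq int1)
    show "AE x in \<nu>. poly q x \<le> 1 / x"
      using ae
    proof eventually_elim
      case (elim x)
      then have "x \<in> {0<..1}" using a b by auto
      then show ?case using qle by blast
    qed
  qed
  then show ?thesis using intq2 by simp
qed

lemma t1_le:
  assumes "\<nu> \<in> moment_measures u a b" "0 < a" "a < b" "b \<le> 1"
  shows "t1 u \<le> ereal (\<integral>t. 1 / t \<partial>\<nu>)"
proof -
  have "t1 u \<le> t_ab u a b"
    unfolding t1_def using assms by (intro INF_lower2[of "(a, b)"]) auto
  also have "t_ab u a b \<le> ereal (\<integral>t. 1 / t \<partial>\<nu>)"
    unfolding t_ab_def using assms by (intro INF_lower) auto
  finally show ?thesis .
qed

lemma t1_ge:
  assumes "\<And>a b \<nu>. 0 < a \<Longrightarrow> a < b \<Longrightarrow> b \<le> 1 \<Longrightarrow> \<nu> \<in> moment_measures u a b \<Longrightarrow> c \<le> (\<integral>t. 1 / t \<partial>\<nu>)"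
  shows "ereal c \<le> t1 u"
  unfolding t1_def t_ab_def using assms by (auto intro!: INF_greatest)

lemma part2:
  fixes s :: "real list" and S :: "real set"
  assumes fin: "finite S" and Ssub: "S \<subseteq> {a1..b1}" and a1: "0 < a1" "a1 < b1" "b1 \<le> 1"
    and wpos: "\<forall>x\<in>S. \<omega> x > 0"
    and sk: "\<forall>j\<le>n. s ! j = (\<Sum>x\<in>S. \<omega> x * x ^ j)" and len: "length s = Suc n"
    and K2: "K2 = 2 * card (S \<inter> {0<..<1}) + (if 1 \<in> S then 1 else 0)" and kK: "k + K2 \<le> n"
  shows "ereal (s ! k) = t1 (take K2 (drop (Suc k) s))"
proof -
  define u where "u = take K2 (drop (Suc k) s)"
  have lu: "length u = K2" using len kK by (simp add: u_def)
  have ui: "u ! j = s ! (Suc k + j)" if "j < K2" for j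
    using that len kK by (simp add: u_def nth_take nth_drop)
  have Spos: "\<forall>x\<in>S. 0 < x \<and> x \<le> 1" using Ssub a1 by auto
  obtain q where q: "\<forall>j\<ge>K2. coeff q j = 0" "\<forall>x\<in>S \<inter> {0<..<1}. x * poly q x = 1"
      "1 \<in> S \<longrightarrow> poly q 1 = 1" "\<forall>t\<in>{0<..1}. poly q t \<le> 1 / t"
    using q_poly[of "S \<inter> {0<..<1}" "1 \<in> S"] fin K2 by auto
  have qS: "x * poly q x = 1" if "x \<in> S" for x
  proof (cases "x < 1")
    case True then show ?thesis using q(2) that Spos by auto
  next
    case False then have "x = 1" using Spos that by force
    then show ?thesis using q(3) that by simp
  qed
  have sumq: "(\<Sum>j<K2. coeff q j * u ! j) = s ! k"
  proof -
    have "(\<Sum>j<K2. coeff q j * u ! j) = (\<Sum>j<K2. \<Sum>x\<in>S. coeff q j * (\<omega> x * x ^ (Suc k + j)))"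
      using ui sk kK by (intro sum.cong refl) (simp add: sum_distrib_left)
    also have "\<dots> = (\<Sum>x\<in>S. \<Sum>j<K2. coeff q j * (\<omega> x * x ^ (Suc k + j)))" by (rule sum.swap)
    also have "\<dots> = (\<Sum>x\<in>S. \<omega> x * x ^ k * (x * (\<Sum>j<K2. coeff q j * x ^ j)))"
      by (intro sum.cong refl) (simp add: sum_distrib_left power_add algebra_simps)
    also have "\<dots> = (\<Sum>x\<in>S. \<omega> x * x ^ k)"
      using qS by (intro sum.cong refl) (simp add: poly_lt[OF q(1), symmetric])
    also have "\<dots> = s ! k" using sk kK by simp
    finally show ?thesis .
  qed
  have up: "t1 u \<le> ereal (s ! k)"
  proof -
    define w where "w x = \<omega> x * x ^ Suc k" for x
    have wnn: "\<forall>x\<in>S. w x \<ge> 0" using wpos Spos unfolding w_def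
      by (metis less_imp_le mult_nonneg_nonneg zero_le_power)
    have "amu S w \<in> moment_measures u a1 b1"
    proof (rule amu_in_mm[OF fin Ssub wnn], intro allI impI)
      fix j assume "j < length u"
      then have j: "j < K2" using lu by simp
      have "(\<Sum>x\<in>S. w x * x ^ j) = (\<Sum>x\<in>S. \<omega> x * x ^ (Suc k + j))"
        by (intro sum.cong refl) (simp add: w_def power_add mult.assoc)
      also have "\<dots> = u ! j" using ui[OF j] sk j kK by simp
      finally show "(\<Sum>x\<in>S. w x * x ^ j) = u ! j" .
    qed
    then have "t1 u \<le> ereal (\<integral>t. 1 / t \<partial>amu S w)" using a1 by (intro t1_le) auto
    also have "(\<integral>t. 1 / t \<partial>amu S w) = (\<Sum>x\<in>S. w x * (1 / x))"
      by (rule amu_integral[OF fin wnn]) simp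
    also have "\<dots> = (\<Sum>x\<in>S. \<omega> x * x ^ k)"
      using Spos by (intro sum.cong refl) (auto simp: w_def)
    also have "\<dots> = s ! k" using sk kK by simp
    finally show ?thesis .
  qed
  have lo: "ereal (s ! k) \<le> t1 u"
  proof (rule t1_ge)
    fix a b \<nu> assume ab: "0 < a" "a < b" "b \<le> 1" and nu: "\<nu> \<in> moment_measures u a b"
    have "(\<Sum>j<length u. coeff q j * u ! j) \<le> (\<integral>t. 1 / t \<partial>\<nu>)"
      by (rule lower_bound[OF nu ab(1) ab(3)]) (use q lu in auto)
    then show "s ! k \<le> (\<integral>t. 1 / t \<partial>\<nu>)" using sumq lu by simp
  qed
  show ?thesis using up lo by (simp add: u_def)
qed

lemma part1:
  fixes s :: "real list" and S :: "real set"
  assumes fin: "finite S" and Ssub: "S \<subseteq> {a1..b1}" and a1: "0 < a1" "a1 < b1" "b1 \<le> 1"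
    and wpos: "\<forall>x\<in>S. \<omega> x > 0"
    and sk: "\<forall>j\<le>n. s ! j = (\<Sum>x\<in>S. \<omega> x * x ^ j)" and len: "length s = Suc n"
    and K2: "K2 = 2 * card (S \<inter> {0<..<1}) + (if 1 \<in> S then 1 else 0)"
    and kn: "k < n" and nK: "n < k + K2"
  shows "t1 (drop (Suc k) s) < ereal (s ! k)"
proof -
  define L where "L = n - k"
  define u where "u = drop (Suc k) s"
  have lu: "length u = L" using len by (simp add: u_def L_def)
  have ui: "u ! i = s ! (Suc k + i)" if "i < L" for i
    using that len by (simp add: u_def nth_drop L_def)
  have Spos: "\<forall>x\<in>S. 0 < x \<and> x \<le> 1" using Ssub a1 by auto
  define a' where "a' = a1 / 2"
  have a': "0 < a'" "a' < 1" using a1 by (auto simp: a'_def)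
  define \<omega>' where "\<omega>' x = \<omega> x * x ^ k" for x
  have S1: "S \<inter> {..<1} = S \<inter> {0<..<1}" using Spos by auto
  obtain \<delta> where \<delta>: "\<delta> > 0" "\<forall>p. degree p \<le> L \<longrightarrow> (\<forall>y\<in>{a'..1}. poly p y \<ge> 0) \<longrightarrow>
            \<delta> * \<bar>coeff p 0\<bar> \<le> (\<Sum>x\<in>S. \<omega>' x * poly p x)"
  proof -
    have "\<exists>\<delta>>0. \<forall>p. degree p \<le> L \<longrightarrow> (\<forall>y\<in>{a'..1}. poly p y \<ge> 0) \<longrightarrow>
            \<delta> * \<bar>coeff p 0\<bar> \<le> (\<Sum>x\<in>S. \<omega>' x * poly p x)"
    proof (rule margin[OF fin])
      show "\<forall>x\<in>S. 0 < \<omega>' x" using wpos Spos by (auto simp: \<omega>'_def)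
      show "S \<subseteq> {a'<..1}" using Ssub a1 by (auto simp: a'_def)
      show "L < 2 * card (S \<inter> {..<1}) + (if 1 \<in> S then 1 else 0)"
        using nK K2 S1 kn by (cases "1 \<in> S") (simp_all add: L_def)
    qed
    then show ?thesis using that by blast
  qed
  define v' where "v' = (s ! k - \<delta>) # u"
  have lv: "length v' = Suc L" by (simp add: v'_def lu)
  have posv: "positive_on v' a' 1"
    unfolding positive_on_def
  proof (intro allI impI)
    fix p :: "real poly"
    assume dp: "degree p + 1 \<le> length v'" and nn: "\<forall>x\<in>{a'..1}. 0 \<le> poly p x"
    have dL: "degree p \<le> L" using dp lv by simp
    have "moment_functional v' p = (\<Sum>i<Suc L. coeff p i * v' ! i)"
      by (simp add: moment_functional_def lv)
    also have "\<dots> = coeff p 0 * (s ! k - \<delta>) + (\<Sum>i<L. coeff p (Suc i) * u ! i)"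
      by (subst sum.lessThan_Suc_shift) (simp add: v'_def)
    also have "\<dots> = (\<Sum>i<Suc L. coeff p i * s ! (k + i)) - \<delta> * coeff p 0"
      by (subst sum.lessThan_Suc_shift) (simp add: ui algebra_simps)
    also have "(\<Sum>i<Suc L. coeff p i * s ! (k + i)) = (\<Sum>x\<in>S. \<omega>' x * poly p x)"
    proof -
      have "(\<Sum>i<Suc L. coeff p i * s ! (k + i)) = (\<Sum>i<Suc L. \<Sum>x\<in>S. coeff p i * (\<omega> x * x ^ (k + i)))"
      proof (intro sum.cong refl)
        fix i assume "i \<in> {..<Suc L}"
        then have "k + i \<le> n" using kn by (simp add: L_def)
        then show "coeff p i * s ! (k + i) = (\<Sum>x\<in>S. coeff p i * (\<omega> x * x ^ (k + i)))"
          using sk by (simp add: sum_distrib_left)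
      qed
      also have "\<dots> = (\<Sum>x\<in>S. \<Sum>i<Suc L. coeff p i * (\<omega> x * x ^ (k + i)))" by (rule sum.swap)
      also have "\<dots> = (\<Sum>x\<in>S. \<omega>' x * (\<Sum>i\<le>L. coeff p i * x ^ i))"
        by (intro sum.cong refl) (simp add: \<omega>'_def sum_distrib_left power_add lessThan_Suc_atMost algebra_simps)
      also have "\<dots> = (\<Sum>x\<in>S. \<omega>' x * poly p x)" using poly_le_deg[OF dL] by simp
      finally show ?thesis .
    qed
    finally have "moment_functional v' p = (\<Sum>x\<in>S. \<omega>' x * poly p x) - \<delta> * coeff p 0" .
    moreover have "\<delta> * \<bar>coeff p 0\<bar> \<le> (\<Sum>x\<in>S. \<omega>' x * poly p x)" using \<delta>(2) dL nn by auto
    moreover have "\<delta> * coeff p 0 \<le> \<delta> * \<bar>coeff p 0\<bar>" using \<delta>(1) by (intro mult_left_mono) auto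
    ultimately show "0 \<le> moment_functional v' p" by linarith
  qed
  obtain t l where tl: "adm a' 1 (Suc L) t l" "\<forall>j\<le>L. mom t l (Suc L) j = v' ! j"
    using moment_exists[OF posv _ lv] a' by auto
  obtain S' w' where S': "finite S'" "S' \<subseteq> {a'..1}" "\<forall>x\<in>S'. w' x > 0"
      "\<forall>j. (\<Sum>x\<in>S'. w' x * x ^ j) = mom t l (Suc L) j"
    using atoms_of_adm[OF tl(1)] by blast
  define w where "w x = w' x * x" for x
  have wnn: "\<forall>x\<in>S'. w x \<ge> 0"
  proof
    fix x assume x: "x \<in> S'"
    then have "x \<ge> a'" "w' x > 0" using S'(2,3) by auto
    then show "w x \<ge> 0" using a' by (simp add: w_def)
  qed
  have mm: "amu S' w \<in> moment_measures u a' 1"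
  proof (rule amu_in_mm[OF S'(1) S'(2) wnn], intro allI impI)
    fix j assume "j < length u"
    then have j: "j < L" using lu by simp
    have "(\<Sum>x\<in>S'. w x * x ^ j) = (\<Sum>x\<in>S'. w' x * x ^ Suc j)"
      by (intro sum.cong refl) (simp add: w_def)
    also have "\<dots> = mom t l (Suc L) (Suc j)" using S'(4) by blast
    also have "\<dots> = v' ! Suc j" using tl(2) j by simp
    also have "\<dots> = u ! j" by (simp add: v'_def)
    finally show "(\<Sum>x\<in>S'. w x * x ^ j) = u ! j" .
  qed
  have "t1 u \<le> ereal (\<integral>x. 1 / x \<partial>amu S' w)" by (rule t1_le[OF mm]) (use a' in auto)
  also have "(\<integral>x. 1 / x \<partial>amu S' w) = (\<Sum>x\<in>S'. w x * (1 / x))"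
    by (rule amu_integral[OF S'(1) wnn]) simp
  also have "\<dots> = (\<Sum>x\<in>S'. w' x * x ^ 0)"
    using S'(2) a' by (intro sum.cong refl) (auto simp: w_def)
  also have "\<dots> = mom t l (Suc L) 0" using S'(4) by blast
  also have "\<dots> = s ! k - \<delta>" using tl(2) by (simp add: v'_def)
  also have "ereal (s ! k - \<delta>) < ereal (s ! k)" using \<delta>(1) by simp
  finally show ?thesis by (simp add: u_def)
qed

theorem theorem8p6:
  fixes n :: nat and s :: "real list"
  assumes len: "length s = Suc n"
    and nonneg: "\<forall>k<length s. s ! k \<ge> 0"
    and pos: "positive_on_01 s"
  shows "(\<forall>k::nat. ereal (real n) - (2 * ind1 s - 1) \<le> ereal (real k) \<and> k + 1 \<le> n
            \<longrightarrow> t1 (drop (Suc k) s) < ereal (s ! k))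
       \<and> (\<forall>(k::nat) (N::int). ereal (real_of_int N) = 2 * ind1 s - 1
            \<longrightarrow> real k \<le> real n - real_of_int N - 1
            \<longrightarrow> ereal (s ! k) = t1 (take (nat (N + 1)) (drop (Suc k) s)))"
proof -
  from pos obtain a b where ab: "0 < a" "a < b" "b \<le> 1" "positive_on s a b"
    unfolding positive_on_01_def by auto
  obtain t l where tl: "adm a b (Suc n) t l" "\<forall>j\<le>n. mom t l (Suc n) j = s ! j"
    using moment_exists[OF ab(4) _ len] ab by auto
  obtain S0 w0 where S0: "finite S0" "S0 \<subseteq> {a..b}" "\<forall>x\<in>S0. w0 x > 0"
      "\<forall>j. (\<Sum>x\<in>S0. w0 x * x ^ j) = mom t l (Suc n) j"
    using atoms_of_adm[OF tl(1)] by blast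
  have mu0: "amu S0 w0 \<in> moment_measures s a b"
  proof (rule amu_in_mm[OF S0(1) S0(2)])
    show "\<forall>x\<in>S0. 0 \<le> w0 x" using S0(3) by auto
    show "\<forall>j<length s. (\<Sum>x\<in>S0. w0 x * x ^ j) = s ! j" using S0(4) tl(2) len by auto
  qed
  have mu0': "amu S0 w0 \<in> moment_measures_1 s"
    unfolding moment_measures_1_def using mu0 ab by blast
  define idx where "idx M = 2 * card (msupp M \<inter> {0<..<1}) + (if 1 \<in> msupp M then 1 else 0)"
    for M :: "real measure"
  define Good where "Good M \<longleftrightarrow> M \<in> moment_measures_1 s \<and> finite (msupp M)" for M
  have "Good (amu S0 w0)" using mu0' amu_msupp[OF S0(1) S0(3)] S0(1) by (simp add: Good_def)
  then obtain \<mu> where \<mu>: "Good \<mu>" "\<forall>M. Good M \<longrightarrow> idx \<mu> \<le> idx M"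
    using ex_has_least_nat[of Good _ idx] by blast
  have ind_eq: "ind1_measure M = ereal (real (idx M) / 2)" if "finite (msupp M)" for M
    using that by (cases "1 \<in> msupp M") (simp_all add: ind1_measure_def idx_def field_simps)
  have ind1s: "ind1 s = ereal (real (idx \<mu>) / 2)"
  proof (rule antisym)
    show "ind1 s \<le> ereal (real (idx \<mu>) / 2)"
      unfolding ind1_def using \<mu>(1) ind_eq by (intro INF_lower2[of \<mu>]) (auto simp: Good_def)
    show "ereal (real (idx \<mu>) / 2) \<le> ind1 s"
      unfolding ind1_def
    proof (rule INF_greatest)
      fix M assume M: "M \<in> moment_measures_1 s"
      show "ereal (real (idx \<mu>) / 2) \<le> ind1_measure M"
      proof (cases "finite (msupp M)")
        case True
        then have "idx \<mu> \<le> idx M" using \<mu>(2) M by (auto simp: Good_def)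
        then show ?thesis using ind_eq[OF True] by simp
      next
        case False then show ?thesis by (simp add: ind1_measure_def)
      qed
    qed
  qed
  define K2 where "K2 = idx \<mu>"
  have two: "2 * ind1 s - 1 = ereal (real K2 - 1)" using ind1s by (simp add: K2_def one_ereal_def)
  obtain a1 b1 where ab1: "0 < a1" "a1 < b1" "b1 \<le> 1" "\<mu> \<in> moment_measures s a1 b1"
    using \<mu>(1) unfolding Good_def moment_measures_1_def by blast
  have sets: "sets \<mu> = sets borel" and fm: "finite_measure \<mu>" and null: "emeasure \<mu> (- {a1..b1}) = 0"
    and mo: "\<forall>k<length s. integrable \<mu> (\<lambda>x. x ^ k) \<and> (\<integral>x. x ^ k \<partial>\<mu>) = s ! k"
    using ab1(4) by (auto simp: moment_measures_def)
  define S where "S = msupp \<mu>"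
  have finS: "finite S" using \<mu>(1) by (simp add: Good_def S_def)
  have Ssub: "S \<subseteq> {a1..b1}" using msupp_subset[OF sets null] by (simp add: S_def)
  define \<omega> where "\<omega> x = measure \<mu> {x}" for x
  have wpos: "\<forall>x\<in>S. \<omega> x > 0" using finite_msupp_pos[OF sets fm] finS by (simp add: S_def \<omega>_def)
  have sk: "\<forall>j\<le>n. s ! j = (\<Sum>x\<in>S. \<omega> x * x ^ j)"
  proof (intro allI impI)
    fix j assume "j \<le> n"
    then have "s ! j = (\<integral>x. x ^ j \<partial>\<mu>)" using mo len by auto
    also have "\<dots> = (\<Sum>y\<in>msupp \<mu>. measure \<mu> {y} * y ^ j)"
      by (rule finite_msupp_integral(1)[OF sets fm]) (use finS in \<open>auto simp: S_def\<close>)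
    finally show "s ! j = (\<Sum>x\<in>S. \<omega> x * x ^ j)" by (simp add: S_def \<omega>_def)
  qed
  have K2def: "K2 = 2 * card (S \<inter> {0<..<1}) + (if 1 \<in> S then 1 else 0)"
    by (simp add: K2_def idx_def S_def)
  show ?thesis
  proof (intro conjI allI impI)
    fix k assume k: "ereal (real n) - (2 * ind1 s - 1) \<le> ereal (real k) \<and> k + 1 \<le> n"
    have "real n - (real K2 - 1) \<le> real k" using k two by simp
    then have nK: "n < k + K2" by linarith
    show "t1 (drop (Suc k) s) < ereal (s ! k)"
      by (rule part1[OF finS Ssub ab1(1-3) wpos sk len K2def]) (use k nK in auto)
  next
    fix k N assume N: "ereal (real_of_int N) = 2 * ind1 s - 1"
      and kN: "real k \<le> real n - real_of_int N - 1"
    have "real_of_int N = real K2 - 1" using N two by simp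
    then have NK: "N = int K2 - 1" by linarith
    then have nN: "nat (N + 1) = K2" by simp
    have "real k \<le> real n - real K2" using kN NK by simp
    then have kK: "k + K2 \<le> n" by linarith
    show "ereal (s ! k) = t1 (take (nat (N + 1)) (drop (Suc k) s))"
      using part2[OF finS Ssub ab1(1-3) wpos sk len K2def kK] nN by simp
  qed
qed

end
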